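(* Let $L>0$, $\bar\alpha\in(0,1)$ and $\rho$ satisfy $-\tfrac{1}{2L}<\rho$ and $-\rho L\ge\frac{1-\bar\alpha}{2}$. Then for every $n\ge2$ there exists an $L$-Lipschitz operator $F:\mathbb R^n\to\mathbb R^n$ with a zero $z^\star$ such that $\langle Fz,z-z^\star\rangle\ge\rho\|Fz\|^2$ for all $z\in\mathbb R^n$, and an initial point $z^0$, such that the sequence generated by $$\bar z^k=z^k-\tfrac1L Fz^k,\qquad z^{k+1}=z^k-\tfrac{\bar\alpha}{L}F\bar z^k$$ does not converge. *)

theory Defs
  imports "HOL-Analysis.Analysis"
begin

primrec eg_seq :: "real \<Rightarrow> real \<Rightarrow> ('a::real_vector \<Rightarrow> 'a) \<Rightarrow> 'a \<Rightarrow> nat \<Rightarrow> 'a" where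
  "eg_seq L a F z0 0 = z0"
| "eg_seq L a F z0 (Suc k) =
     (let z = eg_seq L a F z0 k; zb = z - (1 / L) *\<^sub>R F z in z - (a / L) *\<^sub>R F zb)"

end

theory Submission
  imports Defs
begin

definition EE :: "'n::finite \<Rightarrow> 'n \<Rightarrow> complex \<Rightarrow> real^'n" where
  "EE i j w = (\<chi> k. if k = i then Re w else if k = j then Im w else 0)"

definition PP :: "'n::finite \<Rightarrow> 'n \<Rightarrow> real^'n \<Rightarrow> complex" where
  "PP i j z = Complex (z$i) (z$j)"

lemma PP_EE: "i \<noteq> j \<Longrightarrow> PP i j (EE i j w) = w"
  by (simp add: PP_def EE_def complex_eq_iff)

lemma EE_diff: "EE i j (a - b) = EE i j a - EE i j b"
  by (simp add: EE_def vec_eq_iff)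

lemma EE_scale: "r *\<^sub>R EE i j w = EE i j (of_real r * w)"
  by (simp add: EE_def vec_eq_iff)

lemma PP_diff: "PP i j (a - b) = PP i j a - PP i j b"
  by (simp add: PP_def complex_eq_iff)

lemma inner_EE:
  assumes "i \<noteq> j"
  shows "inner (EE i j w) z = Re w * z$i + Im w * z$j"
proof -
  have "\<And>k. inner (EE i j w $ k) (z $ k) = (if k = i then Re w * z$i else 0) + (if k = j then Im w * z$j else 0)"
    using assms by (auto simp: EE_def)
  then have "inner (EE i j w) z = (\<Sum>k\<in>UNIV. (if k = i then Re w * z$i else 0) + (if k = j then Im w * z$j else 0))"
    by (simp add: inner_vec_def)
  also have "\<dots> = Re w * z$i + Im w * z$j"
    by (simp add: sum.distrib)
  finally show ?thesis .
qed

lemma EE_i: "EE i j w $ i = Re w"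
  by (simp add: EE_def)

lemma EE_j: "i \<noteq> j \<Longrightarrow> EE i j w $ j = Im w"
  by (simp add: EE_def)

lemma norm_EE:
  assumes "i \<noteq> j"
  shows "norm (EE i j w) = cmod w"
proof -
  have "inner (EE i j w) (EE i j w) = (Re w)^2 + (Im w)^2"
    unfolding inner_EE[OF assms] EE_i EE_j[OF assms] by (simp add: power2_eq_square)
  then show ?thesis using norm_eq_sqrt_inner[of "EE i j w"] by (simp only: cmod_def)
qed

lemma cmod_PP:
  assumes "i \<noteq> j"
  shows "cmod (PP i j z) \<le> norm z"
proof -
  have "(cmod (PP i j z))^2 = (z$i)^2 + (z$j)^2"
    by (simp add: PP_def cmod_power2)
  also have "\<dots> = (\<Sum>k\<in>{i,j}. (z$k)^2)"
    using assms by simp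
  also have "\<dots> \<le> (\<Sum>k\<in>UNIV. (z$k)^2)"
    by (rule sum_mono2) auto
  also have "\<dots> = (norm z)^2"
    unfolding power2_norm_eq_inner inner_vec_def by (simp add: power2_eq_square)
  finally show ?thesis
    by (rule power2_le_imp_le) simp
qed

lemma inner_EE_PP:
  assumes "i \<noteq> j"
  shows "inner (EE i j (a * PP i j z)) z = Re a * (cmod (PP i j z))^2"
  using assms by (simp add: inner_EE PP_def cmod_def algebra_simps power2_eq_square)

lemma not_conv_aux:
  fixes X :: "nat \<Rightarrow> 'a::real_normed_vector"
  assumes "\<And>k. norm (X (Suc k) - X k) \<ge> d" and "d > 0"
  shows "\<not> convergent X"
proof
  assume "convergent X"
  then obtain l where l: "X \<longlonglongrightarrow> l" by (auto simp: convergent_def)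
  then have "(\<lambda>k. X (Suc k) - X k) \<longlonglongrightarrow> l - l"
    by (intro tendsto_diff LIMSEQ_Suc)
  then have "(\<lambda>k. X (Suc k) - X k) \<longlonglongrightarrow> 0" by simp
  then have "eventually (\<lambda>k. norm (X (Suc k) - X k) < d) sequentially"
    using assms(2) by (simp add: tendsto_iff dist_norm)
  then obtain k where "norm (X (Suc k) - X k) < d" by (auto dest: eventually_happens)
  with assms(1)[of k] show False by simp
qed

theorem theorem3p3:
  fixes L \<alpha> \<rho> :: real
  assumes "L > 0" and "0 < \<alpha>" and "\<alpha> < 1"
    and "- 1 / (2 * L) < \<rho>" and "- \<rho> * L \<ge> (1 - \<alpha>) / 2"
    and "CARD('n::finite) \<ge> 2"
  shows "\<exists>(F :: real^'n \<Rightarrow> real^'n) zs z0.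
           L-lipschitz_on UNIV F \<and> F zs = 0 \<and>
           (\<forall>z. inner (F z) (z - zs) \<ge> \<rho> * (norm (F z))\<^sup>2) \<and>
           \<not> convergent (eg_seq L \<alpha> F z0)"
proof -
  obtain i :: 'n where True by simp
  have "card (UNIV - {i}) \<ge> 1" using assms(6) by (simp add: card_Diff_singleton)
  then obtain j where "j \<in> UNIV - {i}" by (metis card.empty ex_in_conv not_one_le_zero)
  then have ij: "i \<noteq> j" by auto
  define p where "p = \<rho> * L"
  have p1: "- 1/2 < p" using assms(1,4) by (simp add: p_def field_simps)
  have p2: "p \<le> - (1 - \<alpha>) / 2" using assms(5) by (simp add: p_def)
  have pneg: "p < 0" using p2 assms(3) by simp
  define q where "q = sqrt (1 - p^2)"
  have pq: "q^2 = 1 - p^2"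
    unfolding q_def using p1 pneg by (intro real_sqrt_pow2) (simp add: abs_square_le_1)
  define a where "a = Complex p q"
  have ca: "cmod a = 1"
    unfolding cmod_def a_def using pq by simp
  define m where "m = 1 - of_real \<alpha> * a + of_real \<alpha> * a^2"
  have Rem: "Re m = 1 - \<alpha> * p + \<alpha> * (p^2 - q^2)"
    by (simp add: m_def a_def power2_eq_square)
  have Imm: "Im m = - \<alpha> * q + 2 * \<alpha> * p * q"
    by (simp add: m_def a_def power2_eq_square)
  have "(cmod m)^2 = (1 - \<alpha> * p + \<alpha> * (p^2 - q^2))^2 + (- \<alpha> * q + 2 * \<alpha> * p * q)^2"
    by (simp add: cmod_power2 Rem Imm)
  also have "\<dots> = (1 - \<alpha> * p + \<alpha> * (2*p^2 - 1))^2 + \<alpha>^2 * q^2 * (2*p - 1)^2"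
  proof -
    have e1: "p^2 - q^2 = 2*p^2 - 1" using pq by simp
    have e2: "(- \<alpha> * q + 2 * \<alpha> * p * q)^2 = \<alpha>^2 * q^2 * (2*p - 1)^2"
      by (simp add: power2_eq_square algebra_simps)
    show ?thesis by (simp only: e1 e2)
  qed
  also have "\<dots> = 1 + 2 * \<alpha> * (1 - p) * (\<alpha> - 1 - 2 * p)"
    unfolding pq by (simp add: algebra_simps power2_eq_square)
  finally have cm2: "(cmod m)^2 = 1 + 2 * \<alpha> * (1 - p) * (\<alpha> - 1 - 2 * p)" .
  have "2 * \<alpha> * (1 - p) * (\<alpha> - 1 - 2 * p) \<ge> 0"
    using assms(2) pneg p2 by (intro mult_nonneg_nonneg) auto
  then have "(cmod m)^2 \<ge> 1^2" using cm2 by simp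
  then have cm: "cmod m \<ge> 1" by (rule power2_le_imp_le) simp
  have a1: "a \<noteq> 1" using pneg by (simp add: a_def complex_eq_iff)
  have a0: "a \<noteq> 0" using ca by auto
  have "m - 1 = of_real \<alpha> * a * (a - 1)" by (simp add: m_def algebra_simps power2_eq_square)
  then have m1: "m - 1 \<noteq> 0" using a1 a0 assms(2) by simp
  define F :: "real^'n \<Rightarrow> real^'n" where "F z = L *\<^sub>R EE i j (a * PP i j z)" for z
  have seq: "eg_seq L \<alpha> F (EE i j 1) k = EE i j (m^k)" for k
  proof (induction k)
    case 0 then show ?case by simp
  next
    case (Suc k)
    have "EE i j (m ^ k) - (1 / L) *\<^sub>R F (EE i j (m ^ k)) = EE i j (m^k - a * m^k)"
      using assms(1) by (simp add: F_def PP_EE[OF ij] EE_diff EE_scale)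
    moreover have "EE i j (m ^ k) - (\<alpha> / L) *\<^sub>R F (EE i j (m^k - a * m^k)) = EE i j (m^Suc k)"
    proof -
      have "EE i j (m ^ k) - (\<alpha> / L) *\<^sub>R F (EE i j (m^k - a * m^k))
          = EE i j (m^k - of_real \<alpha> * (a * (m^k - a * m^k)))"
        using assms(1) by (simp add: F_def PP_EE[OF ij] PP_diff EE_diff EE_scale)
      also have "m^k - of_real \<alpha> * (a * (m^k - a * m^k)) = m^Suc k"
        by (simp add: m_def algebra_simps power2_eq_square)
      finally show ?thesis .
    qed
    ultimately show ?case using Suc by (simp add: Let_def)
  qed
  have lip: "L-lipschitz_on UNIV F"
  proof (rule lipschitz_onI)
    fix x y :: "real^'n"
    have "F x - F y = L *\<^sub>R EE i j (a * PP i j (x - y))"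
      by (simp add: F_def PP_diff EE_diff EE_scale algebra_simps)
    then have "dist (F x) (F y) = L * cmod (PP i j (x - y))"
      using assms(1) by (simp add: dist_norm norm_EE[OF ij] norm_mult ca)
    also have "\<dots> \<le> L * dist x y"
      using assms(1) cmod_PP[OF ij, of "x - y"] by (simp add: dist_norm)
    finally show "dist (F x) (F y) \<le> L * dist x y" .
  next
    show "0 \<le> L" using assms(1) by simp
  qed
  have F0: "F 0 = 0"
    by (simp add: F_def PP_def EE_def vec_eq_iff)
  have inn: "inner (F z) (z - 0) \<ge> \<rho> * (norm (F z))\<^sup>2" for z
  proof -
    have "inner (F z) (z - 0) = L * p * (cmod (PP i j z))^2"
      by (simp add: F_def inner_EE_PP[OF ij] a_def)
    moreover have "(norm (F z))^2 = L^2 * (cmod (PP i j z))^2"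
      using assms(1) by (simp add: F_def norm_EE[OF ij] norm_mult ca power_mult_distrib)
    ultimately show ?thesis by (simp add: p_def power2_eq_square)
  qed
  have nc: "\<not> convergent (eg_seq L \<alpha> F (EE i j 1))"
  proof (rule not_conv_aux[where d = "cmod (m - 1)"])
    fix k
    have "norm (eg_seq L \<alpha> F (EE i j 1) (Suc k) - eg_seq L \<alpha> F (EE i j 1) k)
        = cmod (m^k * (m - 1))"
      unfolding seq[of "Suc k"] seq[of k] EE_diff[symmetric] norm_EE[OF ij] by (simp add: algebra_simps)
    also have "\<dots> = cmod m ^ k * cmod (m - 1)" by (simp add: norm_mult norm_power)
    also have "\<dots> \<ge> 1 * cmod (m - 1)"
      using cm by (intro mult_right_mono one_le_power) auto
    finally show "cmod (m - 1) \<le> norm (eg_seq L \<alpha> F (EE i j 1) (Suc k) - eg_seq L \<alpha> F (EE i j 1) k)" by simp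
  next
    show "0 < cmod (m - 1)" using m1 by simp
  qed
  show ?thesis using lip F0 inn nc by blast
qed

end
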